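(* Let $\langle U,B\rangle$ be a 3-frame and consider the Boolean algebra $2^U$ with the operators $\langle B\rangle(X,Y)=\{u\in U\mid\exists x\in X\,\exists y\in Y\,B(x,u,y)\}$ and $[\![B]\!](X,Y)=\{u\in U\mid\forall x\in X\,\forall y\in Y\,B(x,u,y)\}$. Let $\mathcal U_1,\mathcal U_2,\mathcal U_3$ be principal ultrafilters of $2^U$. Then $Q_{\langle B\rangle}(\mathcal U_1,\mathcal U_2,\mathcal U_3)$ implies $S_{[\![B]\!]}(\mathcal U_1,\mathcal U_2,\mathcal U_3)$. In particular, if $U$ is finite, then $Q_{\langle B\rangle}=S_{[\![B]\!]}$.
   Context: A 3-frame is $\langle U,B\rangle$ with $U$ a non-empty set and $B\subseteq U^3$. For binary operators $f,g$ on $2^U$ and ultrafilters $\mathcal U_1,\mathcal U_2,\mathcal U_3$ of $2^U$: $Q_f(\mathcal U_1,\mathcal U_2,\mathcal U_3)\iff f[\mathcal U_1\times\mathcal U_3]\subseteq\mathcal U_2$ and $S_g(\mathcal U_1,\mathcal U_2,\mathcal U_3)\iff g[\mathcal U_1\times\mathcal U_3]\cap\mathcal U_2\neq\emptyset$. A principal ultrafilter of $2^U$ is one of the form $\{X\subseteq U\mid x\in X\}$ for some $x\in U$. *)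

theory Defs
  imports Main
begin

text \<open>The Boolean algebra 2^U is represented by the subsets of U (elements of Pow U).\<close>

definition ultrafilter_of :: "'a set \<Rightarrow> 'a set set \<Rightarrow> bool" where
  "ultrafilter_of U F \<longleftrightarrow>
     F \<subseteq> Pow U \<and> U \<in> F \<and> {} \<notin> F \<and>
     (\<forall>X\<in>F. \<forall>Y\<in>F. X \<inter> Y \<in> F) \<and>
     (\<forall>X\<in>F. \<forall>Y. X \<subseteq> Y \<and> Y \<subseteq> U \<longrightarrow> Y \<in> F) \<and>
     (\<forall>X. X \<subseteq> U \<longrightarrow> X \<in> F \<or> U - X \<in> F)"

definition principal_ultrafilter_of :: "'a set \<Rightarrow> 'a set set \<Rightarrow> bool" where
  "principal_ultrafilter_of U F \<longleftrightarrow>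
     ultrafilter_of U F \<and> (\<exists>x\<in>U. F = {X. X \<subseteq> U \<and> x \<in> X})"

definition diamond_op :: "'a set \<Rightarrow> ('a \<times> 'a \<times> 'a) set \<Rightarrow> 'a set \<Rightarrow> 'a set \<Rightarrow> 'a set" where
  "diamond_op U B X Y = {u \<in> U. \<exists>x\<in>X. \<exists>y\<in>Y. (x, u, y) \<in> B}"

definition box_op :: "'a set \<Rightarrow> ('a \<times> 'a \<times> 'a) set \<Rightarrow> 'a set \<Rightarrow> 'a set \<Rightarrow> 'a set" where
  "box_op U B X Y = {u \<in> U. \<forall>x\<in>X. \<forall>y\<in>Y. (x, u, y) \<in> B}"

definition Q_rel :: "('a set \<Rightarrow> 'a set \<Rightarrow> 'a set) \<Rightarrow> 'a set set \<Rightarrow> 'a set set \<Rightarrow> 'a set set \<Rightarrow> bool" where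
  "Q_rel f U1 U2 U3 \<longleftrightarrow> (\<forall>X\<in>U1. \<forall>Y\<in>U3. f X Y \<in> U2)"

definition S_rel :: "('a set \<Rightarrow> 'a set \<Rightarrow> 'a set) \<Rightarrow> 'a set set \<Rightarrow> 'a set set \<Rightarrow> 'a set set \<Rightarrow> bool" where
  "S_rel g U1 U2 U3 \<longleftrightarrow> (\<exists>X\<in>U1. \<exists>Y\<in>U3. g X Y \<in> U2)"

end

theory Submission
  imports Defs
begin

lemma fin_single:
  assumes uf: "ultrafilter_of U F" and fa: "finite A"
  shows "A \<in> F \<Longrightarrow> \<exists>x. {x} \<in> F"
  using fa
proof (induction A rule: finite_induct)
  case empty then show ?case using uf by (simp add: ultrafilter_of_def)
next
  case (insert a A)
  show ?case
  proof (cases "{a} \<in> F")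
    case True then show ?thesis by blast
  next
    case False
    have sub: "insert a A \<subseteq> U" using insert.prems uf by (auto simp: ultrafilter_of_def)
    hence "{a} \<subseteq> U" by auto
    hence "U - {a} \<in> F" using False uf unfolding ultrafilter_of_def by blast
    hence "insert a A \<inter> (U - {a}) \<in> F" using insert.prems uf unfolding ultrafilter_of_def by blast
    moreover have "insert a A \<inter> (U - {a}) = A" using insert.hyps sub by auto
    ultimately show ?thesis using insert.IH by simp
  qed
qed

lemma fin_principal:
  assumes uf: "ultrafilter_of U F" and fin: "finite U"
  shows "\<exists>x\<in>U. F = {X. X \<subseteq> U \<and> x \<in> X}"
proof -
  have "U \<in> F" using uf by (simp add: ultrafilter_of_def)
  then obtain x where x: "{x} \<in> F" using fin_single[OF uf fin] by blast
  have xU: "x \<in> U" using x uf by (auto simp: ultrafilter_of_def)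
  have "F = {X. X \<subseteq> U \<and> x \<in> X}"
  proof (intro equalityI subsetI)
    fix X assume X: "X \<in> F"
    hence "X \<subseteq> U" using uf by (auto simp: ultrafilter_of_def)
    moreover have "x \<in> X"
    proof (rule ccontr)
      assume "x \<notin> X"
      hence "{x} \<inter> X = {}" by auto
      moreover have "{x} \<inter> X \<in> F" using X x uf by (simp add: ultrafilter_of_def)
      ultimately show False using uf by (simp add: ultrafilter_of_def)
    qed
    ultimately show "X \<in> {X. X \<subseteq> U \<and> x \<in> X}" by simp
  next
    fix X assume "X \<in> {X. X \<subseteq> U \<and> x \<in> X}"
    then show "X \<in> F" using x uf unfolding ultrafilter_of_def by (metis (no_types, lifting) empty_subsetI insert_subset mem_Collect_eq)
  qed
  thus ?thesis using xU by blast
qed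

lemma main_equiv:
  assumes B: "B \<subseteq> U \<times> U \<times> U" and x1: "x1 \<in> U" and x2: "x2 \<in> U" and x3: "x3 \<in> U"
  shows "Q_rel (diamond_op U B) {X. X \<subseteq> U \<and> x1 \<in> X} {X. X \<subseteq> U \<and> x2 \<in> X} {X. X \<subseteq> U \<and> x3 \<in> X}
     \<longleftrightarrow> (x1, x2, x3) \<in> B"
    and "S_rel (box_op U B) {X. X \<subseteq> U \<and> x1 \<in> X} {X. X \<subseteq> U \<and> x2 \<in> X} {X. X \<subseteq> U \<and> x3 \<in> X}
     \<longleftrightarrow> (x1, x2, x3) \<in> B"
proof -
  show "Q_rel (diamond_op U B) {X. X \<subseteq> U \<and> x1 \<in> X} {X. X \<subseteq> U \<and> x2 \<in> X} {X. X \<subseteq> U \<and> x3 \<in> X}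
     \<longleftrightarrow> (x1, x2, x3) \<in> B"
  proof
    assume "Q_rel (diamond_op U B) {X. X \<subseteq> U \<and> x1 \<in> X} {X. X \<subseteq> U \<and> x2 \<in> X} {X. X \<subseteq> U \<and> x3 \<in> X}"
    hence "diamond_op U B {x1} {x3} \<in> {X. X \<subseteq> U \<and> x2 \<in> X}"
      unfolding Q_rel_def using x1 x3 by auto
    thus "(x1, x2, x3) \<in> B" by (simp add: diamond_op_def)
  next
    assume "(x1, x2, x3) \<in> B"
    thus "Q_rel (diamond_op U B) {X. X \<subseteq> U \<and> x1 \<in> X} {X. X \<subseteq> U \<and> x2 \<in> X} {X. X \<subseteq> U \<and> x3 \<in> X}"
      unfolding Q_rel_def diamond_op_def using x2 by auto
  qed
  show "S_rel (box_op U B) {X. X \<subseteq> U \<and> x1 \<in> X} {X. X \<subseteq> U \<and> x2 \<in> X} {X. X \<subseteq> U \<and> x3 \<in> X}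
     \<longleftrightarrow> (x1, x2, x3) \<in> B"
  proof
    assume "S_rel (box_op U B) {X. X \<subseteq> U \<and> x1 \<in> X} {X. X \<subseteq> U \<and> x2 \<in> X} {X. X \<subseteq> U \<and> x3 \<in> X}"
    thus "(x1, x2, x3) \<in> B" unfolding S_rel_def box_op_def by auto
  next
    assume "(x1, x2, x3) \<in> B"
    hence "box_op U B {x1} {x3} \<in> {X. X \<subseteq> U \<and> x2 \<in> X}" using x2 by (auto simp: box_op_def)
    thus "S_rel (box_op U B) {X. X \<subseteq> U \<and> x1 \<in> X} {X. X \<subseteq> U \<and> x2 \<in> X} {X. X \<subseteq> U \<and> x3 \<in> X}"
      unfolding S_rel_def using x1 x3 by (intro bexI[of _ "{x1}"] bexI[of _ "{x3}"]) auto
  qed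
qed

theorem proposition47:
  fixes U :: "'a set" and B :: "('a \<times> 'a \<times> 'a) set"
  assumes "U \<noteq> {}" and "B \<subseteq> U \<times> U \<times> U"
  shows "(\<forall>U1 U2 U3. principal_ultrafilter_of U U1 \<and> principal_ultrafilter_of U U2 \<and>
            principal_ultrafilter_of U U3 \<longrightarrow>
            Q_rel (diamond_op U B) U1 U2 U3 \<longrightarrow> S_rel (box_op U B) U1 U2 U3)
       \<and> (finite U \<longrightarrow>
            (\<forall>U1 U2 U3. ultrafilter_of U U1 \<and> ultrafilter_of U U2 \<and> ultrafilter_of U U3 \<longrightarrow>
               (Q_rel (diamond_op U B) U1 U2 U3 \<longleftrightarrow> S_rel (box_op U B) U1 U2 U3)))"
proof (intro conjI allI impI)
  fix U1 U2 U3
  assume "principal_ultrafilter_of U U1 \<and> principal_ultrafilter_of U U2 \<and> principal_ultrafilter_of U U3"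
    and q: "Q_rel (diamond_op U B) U1 U2 U3"
  then obtain x1 x2 x3 where "x1 \<in> U" "x2 \<in> U" "x3 \<in> U"
    "U1 = {X. X \<subseteq> U \<and> x1 \<in> X}" "U2 = {X. X \<subseteq> U \<and> x2 \<in> X}" "U3 = {X. X \<subseteq> U \<and> x3 \<in> X}"
    unfolding principal_ultrafilter_of_def by blast
  thus "S_rel (box_op U B) U1 U2 U3" using q main_equiv[OF assms(2)] by simp
next
  fix U1 U2 U3
  assume fin: "finite U" and
    h: "ultrafilter_of U U1 \<and> ultrafilter_of U U2 \<and> ultrafilter_of U U3"
  then obtain x1 x2 x3 where "x1 \<in> U" "x2 \<in> U" "x3 \<in> U"
    "U1 = {X. X \<subseteq> U \<and> x1 \<in> X}" "U2 = {X. X \<subseteq> U \<and> x2 \<in> X}" "U3 = {X. X \<subseteq> U \<and> x3 \<in> X}"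
    using fin_principal[OF _ fin] by meson
  thus "Q_rel (diamond_op U B) U1 U2 U3 \<longleftrightarrow> S_rel (box_op U B) U1 U2 U3"
    using main_equiv[OF assms(2)] by simp
qed

end
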